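(* QHC is a strongly conservative extension of intuitionistic predicate calculus QH: if $\alpha_1,\dots,\alpha_n,\alpha$ are problems built from atomic problems and $\bot$ using only intuitionistic connectives and quantifiers (no $!$, $?$), and $\alpha_1,\dots,\alpha_n\vdash_{\mathrm{QHC}}\alpha$, then $\alpha_1,\dots,\alpha_n\vdash_{\mathrm{QH}}\alpha$.
   Context: QHC is a two-sorted first-order calculus. Its only terms are individual variables. Every formula is either a problem (denoted by Greek letters $\alpha,\beta,\gamma,\dots$) or a proposition (denoted by Latin letters $p,q,\dots$). Atomic formulas are proposition variables $p(t_1,\dots,t_n)$ (of proposition type), problem variables $\pi(t_1,\dots,t_n)$ (of problem type), and the constants $0$ (a proposition, classical falsity) and $\bot$ (a problem, intuitionistic absurdity). Propositions are closed under the classical connectives $\land,\lor,\to$ and quantifiers $\exists,\forall$; problems are closed under the intuitionistic connectives $\land,\lor,\to$ and quantifiers $\exists,\forall$ (the same symbols are used, distinguished by the type of the arguments). $\neg p$ abbreviates $p\to 0$, $\neg\alpha$ abbreviates $\alpha\to\bot$, and $\leftrightarrow$ is defined as usual. There are two type-conversion operators: if $p$ is a proposition then $!p$ is a problem, and if $\alpha$ is a problem then $?\alpha$ is a proposition. Deductive system of QHC: all axioms and rules of classical predicate logic applied to all propositions; all postulates and rules of intuitionistic predicate logic applied to all problems; the rules $p\,/\,!p$ and $\alpha\,/\,?\alpha$; and the schemas $?!p\to p$; $\alpha\to\, !?\alpha$; $!(p\to q)\to(!p\to !q)$; $?(\alpha\to\beta)\to(?\alpha\to ?\beta)$; $!0\to\bot$;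 $?(\alpha\land\beta)\leftrightarrow ?\alpha\land ?\beta$; $?(\alpha\lor\beta)\leftrightarrow ?\alpha\lor ?\beta$; $?\bot\to 0$; $?\exists x\,\alpha(x)\leftrightarrow\exists x\,?\alpha(x)$; $?\forall x\,\alpha(x)\to\forall x\,?\alpha(x)$ (usual variable side conditions implicit). $\vdash A$ means $A$ is derivable in QHC; $A\Rightarrow B$ means $\vdash A\to B$ and $A\Leftrightarrow B$ means $\vdash A\leftrightarrow B$ (with $A,B$ of the same type); $A\vdash B$ means $B$ is derivable in QHC from the premise $A$. Notation: $\Box p := ?!p$ (a proposition) and $\nabla\alpha := !?\alpha$ (a problem). QC and QH denote classical and intuitionistic predicate calculus. *)

theory Defs
  imports Main
begin

text \<open>Individual variables are natural numbers (de Bruijn indices); the only terms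
are variables.  Predicate / problem variables are named by natural numbers and
applied to a list of individual variables.\<close>

datatype qprop =
    PAtom nat "nat list"
  | PZero
  | PConj qprop qprop
  | PDisj qprop qprop
  | PImp qprop qprop
  | PEx qprop                    \<comment> \<open>binds index 0\<close>
  | PAll qprop
  | Quest qprob
and qprob =
    AAtom nat "nat list"
  | ABot
  | AConj qprob qprob
  | ADisj qprob qprob
  | AImp qprob qprob
  | AEx qprob
  | AAll qprob
  | Bang qprop

definition liftr :: "(nat \<Rightarrow> nat) \<Rightarrow> nat \<Rightarrow> nat" where
  "liftr \<rho> i = (case i of 0 \<Rightarrow> 0 | Suc j \<Rightarrow> Suc (\<rho> j))"

primrec renP :: "(nat \<Rightarrow> nat) \<Rightarrow> qprop \<Rightarrow> qprop"
and renA :: "(nat \<Rightarrow> nat) \<Rightarrow> qprob \<Rightarrow> qprob" where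
  "renP \<rho> (PAtom n ts) = PAtom n (map \<rho> ts)"
| "renP \<rho> PZero = PZero"
| "renP \<rho> (PConj p q) = PConj (renP \<rho> p) (renP \<rho> q)"
| "renP \<rho> (PDisj p q) = PDisj (renP \<rho> p) (renP \<rho> q)"
| "renP \<rho> (PImp p q) = PImp (renP \<rho> p) (renP \<rho> q)"
| "renP \<rho> (PEx p) = PEx (renP (liftr \<rho>) p)"
| "renP \<rho> (PAll p) = PAll (renP (liftr \<rho>) p)"
| "renP \<rho> (Quest a) = Quest (renA \<rho> a)"
| "renA \<rho> (AAtom n ts) = AAtom n (map \<rho> ts)"
| "renA \<rho> ABot = ABot"
| "renA \<rho> (AConj a b) = AConj (renA \<rho> a) (renA \<rho> b)"
| "renA \<rho> (ADisj a b) = ADisj (renA \<rho> a) (renA \<rho> b)"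
| "renA \<rho> (AImp a b) = AImp (renA \<rho> a) (renA \<rho> b)"
| "renA \<rho> (AEx a) = AEx (renA (liftr \<rho>) a)"
| "renA \<rho> (AAll a) = AAll (renA (liftr \<rho>) a)"
| "renA \<rho> (Bang p) = Bang (renP \<rho> p)"

primrec freeP :: "qprop \<Rightarrow> nat set" and freeA :: "qprob \<Rightarrow> nat set" where
  "freeP (PAtom n ts) = set ts"
| "freeP PZero = {}"
| "freeP (PConj p q) = freeP p \<union> freeP q"
| "freeP (PDisj p q) = freeP p \<union> freeP q"
| "freeP (PImp p q) = freeP p \<union> freeP q"
| "freeP (PEx p) = (\<lambda>i. i - 1) ` (freeP p - {0})"
| "freeP (PAll p) = (\<lambda>i. i - 1) ` (freeP p - {0})"
| "freeP (Quest a) = freeA a"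
| "freeA (AAtom n ts) = set ts"
| "freeA ABot = {}"
| "freeA (AConj a b) = freeA a \<union> freeA b"
| "freeA (ADisj a b) = freeA a \<union> freeA b"
| "freeA (AImp a b) = freeA a \<union> freeA b"
| "freeA (AEx a) = (\<lambda>i. i - 1) ` (freeA a - {0})"
| "freeA (AAll a) = (\<lambda>i. i - 1) ` (freeA a - {0})"
| "freeA (Bang p) = freeP p"

text \<open>\<open>inst x A\<close>: the body A of a quantifier with the bound variable replaced by
the variable x, i.e. A(x).  \<open>abst x A\<close>: turns a formula A(x) into a quantifier
body binding x (so that \<open>PAll (abstP x A)\<close> is \<open>\<forall>x A(x)\<close>).\<close>
definition instv :: "nat \<Rightarrow> nat \<Rightarrow> nat" where
  "instv x i = (case i of 0 \<Rightarrow> x | Suc j \<Rightarrow> j)"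
definition abstv :: "nat \<Rightarrow> nat \<Rightarrow> nat" where
  "abstv x i = (if i = x then 0 else Suc i)"

abbreviation "instP x p \<equiv> renP (instv x) p"
abbreviation "instA x a \<equiv> renA (instv x) a"
abbreviation "abstP x p \<equiv> renP (abstv x) p"
abbreviation "abstA x a \<equiv> renA (abstv x) a"

definition PIff :: "qprop \<Rightarrow> qprop \<Rightarrow> qprop" where
  "PIff p q = PConj (PImp p q) (PImp q p)"

text \<open>Pure problems: built from atomic problems and bot with intuitionistic
connectives and quantifiers only (no ! and hence no ?).\<close>
primrec pureA :: "qprob \<Rightarrow> bool" where
  "pureA (AAtom n ts) = True"
| "pureA ABot = True"
| "pureA (AConj a b) = (pureA a \<and> pureA b)"
| "pureA (ADisj a b) = (pureA a \<and> pureA b)"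
| "pureA (AImp a b) = (pureA a \<and> pureA b)"
| "pureA (AEx a) = pureA a"
| "pureA (AAll a) = pureA a"
| "pureA (Bang p) = False"

inductive cl_ax :: "qprop \<Rightarrow> bool" where
  "cl_ax (PImp p (PImp q p))"
| "cl_ax (PImp (PImp p q) (PImp (PImp p (PImp q r)) (PImp p r)))"
| "cl_ax (PImp (PConj p q) p)"
| "cl_ax (PImp (PConj p q) q)"
| "cl_ax (PImp p (PImp q (PConj p q)))"
| "cl_ax (PImp p (PDisj p q))"
| "cl_ax (PImp q (PDisj p q))"
| "cl_ax (PImp (PImp p r) (PImp (PImp q r) (PImp (PDisj p q) r)))"
| "cl_ax (PImp PZero p)"
| "cl_ax (PImp (PImp (PImp p PZero) PZero) p)"
| "cl_ax (PImp (PAll p) (instP x p))"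
| "cl_ax (PImp (instP x p) (PEx p))"

inductive int_ax :: "qprob \<Rightarrow> bool" where
  "int_ax (AImp a (AImp b a))"
| "int_ax (AImp (AImp a b) (AImp (AImp a (AImp b c)) (AImp a c)))"
| "int_ax (AImp (AConj a b) a)"
| "int_ax (AImp (AConj a b) b)"
| "int_ax (AImp a (AImp b (AConj a b)))"
| "int_ax (AImp a (ADisj a b))"
| "int_ax (AImp b (ADisj a b))"
| "int_ax (AImp (AImp a c) (AImp (AImp b c) (AImp (ADisj a b) c)))"
| "int_ax (AImp ABot a)"
| "int_ax (AImp (AAll a) (instA x a))"
| "int_ax (AImp (instA x a) (AEx a))"

inductive qhc_axP :: "qprop \<Rightarrow> bool" where
  "qhc_axP (PImp (Quest (Bang p)) p)"
| "qhc_axP (PImp (Quest (AImp a b)) (PImp (Quest a) (Quest b)))"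
| "qhc_axP (PIff (Quest (AConj a b)) (PConj (Quest a) (Quest b)))"
| "qhc_axP (PIff (Quest (ADisj a b)) (PDisj (Quest a) (Quest b)))"
| "qhc_axP (PImp (Quest ABot) PZero)"
| "qhc_axP (PIff (Quest (AEx a)) (PEx (Quest a)))"
| "qhc_axP (PImp (Quest (AAll a)) (PAll (Quest a)))"

inductive qhc_axA :: "qprob \<Rightarrow> bool" where
  "qhc_axA (AImp a (Bang (Quest a)))"
| "qhc_axA (AImp (Bang (PImp p q)) (AImp (Bang p) (Bang q)))"
| "qhc_axA (AImp (Bang PZero) ABot)"

inductive qhcP :: "qprob set \<Rightarrow> qprop \<Rightarrow> bool"
and qhcA :: "qprob set \<Rightarrow> qprob \<Rightarrow> bool" for \<Gamma> where
  p_ax: "cl_ax p \<Longrightarrow> qhcP \<Gamma> p"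
| p_qax: "qhc_axP p \<Longrightarrow> qhcP \<Gamma> p"
| p_mp: "qhcP \<Gamma> (PImp p q) \<Longrightarrow> qhcP \<Gamma> p \<Longrightarrow> qhcP \<Gamma> q"
| p_all: "qhcP \<Gamma> (PImp q p) \<Longrightarrow> x \<notin> freeP q \<Longrightarrow> qhcP \<Gamma> (PImp q (PAll (abstP x p)))"
| p_ex: "qhcP \<Gamma> (PImp p q) \<Longrightarrow> x \<notin> freeP q \<Longrightarrow> qhcP \<Gamma> (PImp (PEx (abstP x p)) q)"
| p_quest: "qhcA \<Gamma> a \<Longrightarrow> qhcP \<Gamma> (Quest a)"
| a_hyp: "a \<in> \<Gamma> \<Longrightarrow> qhcA \<Gamma> a"
| a_ax: "int_ax a \<Longrightarrow> qhcA \<Gamma> a"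
| a_qax: "qhc_axA a \<Longrightarrow> qhcA \<Gamma> a"
| a_mp: "qhcA \<Gamma> (AImp a b) \<Longrightarrow> qhcA \<Gamma> a \<Longrightarrow> qhcA \<Gamma> b"
| a_all: "qhcA \<Gamma> (AImp b a) \<Longrightarrow> x \<notin> freeA b \<Longrightarrow> qhcA \<Gamma> (AImp b (AAll (abstA x a)))"
| a_ex: "qhcA \<Gamma> (AImp a b) \<Longrightarrow> x \<notin> freeA b \<Longrightarrow> qhcA \<Gamma> (AImp (AEx (abstA x a)) b)"
| a_bang: "qhcP \<Gamma> p \<Longrightarrow> qhcA \<Gamma> (Bang p)"

inductive qh :: "qprob set \<Rightarrow> qprob \<Rightarrow> bool" for \<Gamma> where
  qh_hyp: "a \<in> \<Gamma> \<Longrightarrow> pureA a \<Longrightarrow> qh \<Gamma> a"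
| qh_ax: "int_ax a \<Longrightarrow> pureA a \<Longrightarrow> qh \<Gamma> a"
| qh_mp: "qh \<Gamma> (AImp a b) \<Longrightarrow> qh \<Gamma> a \<Longrightarrow> qh \<Gamma> b"
| qh_all: "qh \<Gamma> (AImp b a) \<Longrightarrow> x \<notin> freeA b \<Longrightarrow> qh \<Gamma> (AImp b (AAll (abstA x a)))"
| qh_ex: "qh \<Gamma> (AImp a b) \<Longrightarrow> x \<notin> freeA b \<Longrightarrow> qh \<Gamma> (AImp (AEx (abstA x a)) b)"

end

theory Submission
  imports Defs
begin

lemma liftr_comp: "liftr \<sigma> \<circ> liftr \<rho> = liftr (\<sigma> \<circ> \<rho>)"
  by (auto simp: liftr_def fun_eq_iff split: nat.split)

lemma liftr_id: "liftr (\<lambda>a. a) = (\<lambda>a. a)"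
  by (auto simp: liftr_def fun_eq_iff split: nat.split)

lemma ren_comp: "renP \<sigma> (renP \<rho> p) = renP (\<sigma> \<circ> \<rho>) p"
  "renA \<sigma> (renA \<rho> a) = renA (\<sigma> \<circ> \<rho>) a"
  by (induct p and a arbitrary: \<sigma> \<rho> and \<sigma> \<rho>) (auto simp: liftr_comp)

lemma ren_id: "renP id p = p" "renA id a = a"
  by (induct p and a) (auto simp: liftr_id id_def)

lemma ren_cong: "(\<forall>i\<in>freeP p. \<rho> i = \<sigma> i) \<Longrightarrow> renP \<rho> p = renP \<sigma> p"
  "(\<forall>i\<in>freeA a. \<rho> i = \<sigma> i) \<Longrightarrow> renA \<rho> a = renA \<sigma> a"
proof (induct p and a arbitrary: \<rho> \<sigma> and \<rho> \<sigma>)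
  case (PEx p) 
  have "\<forall>i\<in>freeP p. liftr \<rho> i = liftr \<sigma> i"
    using PEx.prems by (force simp: liftr_def split: nat.split)
  then show ?case using PEx.hyps by simp
next
  case (PAll p) 
  have "\<forall>i\<in>freeP p. liftr \<rho> i = liftr \<sigma> i"
    using PAll.prems by (force simp: liftr_def split: nat.split)
  then show ?case using PAll.hyps by simp
next
  case (AEx p) 
  have "\<forall>i\<in>freeA p. liftr \<rho> i = liftr \<sigma> i"
    using AEx.prems by (force simp: liftr_def split: nat.split)
  then show ?case using AEx.hyps by simp
next
  case (AAll p) 
  have "\<forall>i\<in>freeA p. liftr \<rho> i = liftr \<sigma> i"
    using AAll.prems by (force simp: liftr_def split: nat.split)
  then show ?case using AAll.hyps by simp
qed auto

lemma abst_inst: "x \<notin> freeA (AAll a) \<Longrightarrow> abstA x (instA x a) = a"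
proof -
  assume x: "x \<notin> freeA (AAll a)"
  have "abstA x (instA x a) = renA (abstv x \<circ> instv x) a" by (simp add: ren_comp)
  also have "\<dots> = renA id a"
  proof (rule ren_cong)
    show "\<forall>i\<in>freeA a. (abstv x \<circ> instv x) i = id i"
    proof
      fix i assume i: "i \<in> freeA a"
      show "(abstv x \<circ> instv x) i = id i"
      proof (cases i)
        case 0 then show ?thesis by (simp add: abstv_def instv_def)
      next
        case (Suc j)
        then have "j \<in> freeA (AAll a)" using i by force
        then have "j \<noteq> x" using x by auto
        then show ?thesis using Suc by (simp add: abstv_def instv_def)
      qed
    qed
  qed
  finally show ?thesis by (simp add: ren_id)
qed

lemma finite_free: "finite (freeP p)" "finite (freeA a)"
  by (induct p and a) auto

lemma fresh: "finite S \<Longrightarrow> \<exists>x::nat. x \<notin> S"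
  using ex_new_if_finite infinite_UNIV_nat by blast

lemma pure_ren: "pureA (renA \<rho> a) = pureA a"
  by (induct a arbitrary: \<rho>) auto

abbreviation N :: "qprob \<Rightarrow> qprob" where "N a \<equiv> AImp a ABot"

primrec tP :: "qprop \<Rightarrow> qprob" and tA :: "qprob \<Rightarrow> qprob" where
  "tP (PAtom n ts) = ABot"
| "tP PZero = ABot"
| "tP (PConj p q) = AConj (tP p) (tP q)"
| "tP (PDisj p q) = N (AConj (N (tP p)) (N (tP q)))"
| "tP (PImp p q) = AImp (tP p) (tP q)"
| "tP (PEx p) = N (AAll (N (tP p)))"
| "tP (PAll p) = AAll (tP p)"
| "tP (Quest a) = N (N (tA a))"
| "tA (AAtom n ts) = AAtom n ts"
| "tA ABot = ABot"
| "tA (AConj a b) = AConj (tA a) (tA b)"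
| "tA (ADisj a b) = ADisj (tA a) (tA b)"
| "tA (AImp a b) = AImp (tA a) (tA b)"
| "tA (AEx a) = AEx (tA a)"
| "tA (AAll a) = AAll (tA a)"
| "tA (Bang p) = tP p"

lemma t_pure [simp]: "pureA (tP p)" "pureA (tA a)"
  by (induct p and a) auto

lemma t_ren: "tP (renP \<rho> p) = renA \<rho> (tP p)" "tA (renA \<rho> a) = renA \<rho> (tA a)"
  by (induct p and a arbitrary: \<rho> and \<rho>) auto

lemma t_free: "freeA (tP p) \<subseteq> freeP p" "freeA (tA a) \<subseteq> freeA a"
  by (induct p and a) auto

lemma t_pure_id: "pureA a \<Longrightarrow> tA a = a"
  by (induct a) auto

lemma qh_pure: "qh \<Gamma> a \<Longrightarrow> pureA a"
  by (induct rule: qh.induct) (auto simp: pure_ren)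

inductive pr :: "qprob set \<Rightarrow> qprob list \<Rightarrow> qprob \<Rightarrow> bool" for \<Gamma> where
  pr_hyp: "a \<in> set H \<Longrightarrow> pureA a \<Longrightarrow> pr \<Gamma> H a"
| pr_qh: "qh \<Gamma> a \<Longrightarrow> pr \<Gamma> H a"
| pr_mp: "pr \<Gamma> H (AImp a b) \<Longrightarrow> pr \<Gamma> H a \<Longrightarrow> pr \<Gamma> H b"

lemma pr_pure: "pr \<Gamma> H a \<Longrightarrow> pureA a"
  by (induct rule: pr.induct) (auto simp: qh_pure)

lemma qh_id: "pureA a \<Longrightarrow> qh \<Gamma> (AImp a a)"
proof -
  assume a: "pureA a"
  have 1: "qh \<Gamma> (AImp (AImp a (AImp a a)) (AImp (AImp a (AImp (AImp a a) a)) (AImp a a)))"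
    by (rule qh_ax) (auto intro: int_ax.intros simp: a)
  have 2: "qh \<Gamma> (AImp a (AImp a a))" by (rule qh_ax) (auto intro: int_ax.intros simp: a)
  have 3: "qh \<Gamma> (AImp a (AImp (AImp a a) a))" by (rule qh_ax) (auto intro: int_ax.intros simp: a)
  show ?thesis by (rule qh_mp[OF qh_mp[OF 1 2] 3])
qed

lemma pr_ax: "int_ax a \<Longrightarrow> pureA a \<Longrightarrow> pr \<Gamma> H a"
  by (rule pr_qh, rule qh_ax)

lemma pr_K: "pr \<Gamma> H a \<Longrightarrow> pureA h \<Longrightarrow> pr \<Gamma> H (AImp h a)"
  by (rule pr_mp[of _ _ a], rule pr_ax, auto intro: int_ax.intros dest: pr_pure)

lemma pr_ded: "pr \<Gamma> H' b \<Longrightarrow> H' = h # H \<Longrightarrow> pureA h \<Longrightarrow> pr \<Gamma> H (AImp h b)"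
proof (induct rule: pr.induct)
  case (pr_hyp a H')
  show ?case
  proof (cases "a = h")
    case True then show ?thesis using pr_hyp by (auto intro: pr_qh qh_id)
  next
    case False then show ?thesis using pr_hyp by (auto intro: pr_K pr.pr_hyp)
  qed
next
  case (pr_qh a H')
  then show ?case by (auto intro: pr_K pr.pr_qh)
next
  case (pr_mp H' a b)
  have "pureA (AImp a b)" using pr_mp(1) by (rule pr_pure)
  then have pa: "pureA a" "pureA b" by auto
  have S: "pr \<Gamma> H (AImp (AImp h a) (AImp (AImp h (AImp a b)) (AImp h b)))"
    by (rule pr_ax) (auto intro: int_ax.intros simp: pa pr_mp)
  show ?case by (rule pr.pr_mp[OF pr.pr_mp[OF S]]) (use pr_mp in auto)
qed

lemma impI: "pr \<Gamma> (h # H) b \<Longrightarrow> pureA h \<Longrightarrow> pr \<Gamma> H (AImp h b)"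
  using pr_ded by blast

lemma pr_weaken: "pr \<Gamma> H a \<Longrightarrow> set H \<subseteq> set H' \<Longrightarrow> pr \<Gamma> H' a"
  by (induct rule: pr.induct) (auto intro: pr.intros)

lemma pr_to_qh: "pr \<Gamma> H a \<Longrightarrow> H = [] \<Longrightarrow> qh \<Gamma> a"
  by (induct rule: pr.induct) (auto intro: qh_mp)

lemma hyp: "a \<in> set H \<Longrightarrow> pureA a \<Longrightarrow> pr \<Gamma> H a" by (rule pr_hyp)

lemma conjI: "pr \<Gamma> H a \<Longrightarrow> pr \<Gamma> H b \<Longrightarrow> pr \<Gamma> H (AConj a b)"
proof -
  assume 1: "pr \<Gamma> H a" and 2: "pr \<Gamma> H b"
  have "pr \<Gamma> H (AImp a (AImp b (AConj a b)))"
    using pr_pure[OF 1] pr_pure[OF 2] by (auto intro!: pr_ax int_ax.intros)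
  then show ?thesis using 1 2 by (meson pr_mp)
qed

lemma conjD1: "pr \<Gamma> H (AConj a b) \<Longrightarrow> pr \<Gamma> H a"
proof -
  assume 1: "pr \<Gamma> H (AConj a b)"
  have "pr \<Gamma> H (AImp (AConj a b) a)"
    using pr_pure[OF 1] by (auto intro!: pr_ax int_ax.intros)
  then show ?thesis using 1 by (meson pr_mp)
qed

lemma conjD2: "pr \<Gamma> H (AConj a b) \<Longrightarrow> pr \<Gamma> H b"
proof -
  assume 1: "pr \<Gamma> H (AConj a b)"
  have "pr \<Gamma> H (AImp (AConj a b) b)"
    using pr_pure[OF 1] by (auto intro!: pr_ax int_ax.intros)
  then show ?thesis using 1 by (meson pr_mp)
qed

lemma disjI1: "pr \<Gamma> H a \<Longrightarrow> pureA b \<Longrightarrow> pr \<Gamma> H (ADisj a b)"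
proof -
  assume 1: "pr \<Gamma> H a" and b: "pureA b"
  have "pr \<Gamma> H (AImp a (ADisj a b))"
    using pr_pure[OF 1] b by (auto intro!: pr_ax int_ax.intros)
  then show ?thesis using 1 by (meson pr_mp)
qed

lemma disjI2: "pr \<Gamma> H b \<Longrightarrow> pureA a \<Longrightarrow> pr \<Gamma> H (ADisj a b)"
proof -
  assume 1: "pr \<Gamma> H b" and b: "pureA a"
  have "pr \<Gamma> H (AImp b (ADisj a b))"
    using pr_pure[OF 1] b by (auto intro!: pr_ax int_ax.intros)
  then show ?thesis using 1 by (meson pr_mp)
qed

lemma disjE: "pr \<Gamma> H (ADisj a b) \<Longrightarrow> pr \<Gamma> (a # H) c \<Longrightarrow> pr \<Gamma> (b # H) c \<Longrightarrow> pr \<Gamma> H c"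
proof -
  assume d: "pr \<Gamma> H (ADisj a b)" and 1: "pr \<Gamma> (a # H) c" and 2: "pr \<Gamma> (b # H) c"
  have p: "pureA a" "pureA b" "pureA c" using pr_pure[OF d] pr_pure[OF 1] by auto
  have ax: "pr \<Gamma> H (AImp (AImp a c) (AImp (AImp b c) (AImp (ADisj a b) c)))"
    using p by (auto intro!: pr_ax int_ax.intros)
  have 3: "pr \<Gamma> H (AImp a c)" using 1 p by (simp add: impI)
  have 4: "pr \<Gamma> H (AImp b c)" using 2 p by (simp add: impI)
  show ?thesis by (rule pr_mp[OF pr_mp[OF pr_mp[OF ax 3] 4] d])
qed

lemma botE: "pr \<Gamma> H ABot \<Longrightarrow> pureA c \<Longrightarrow> pr \<Gamma> H c"
proof -
  assume 1: "pr \<Gamma> H ABot" and c: "pureA c"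
  have "pr \<Gamma> H (AImp ABot c)" using c by (auto intro!: pr_ax int_ax.intros)
  then show ?thesis using 1 by (meson pr_mp)
qed

lemma mpI: "pr \<Gamma> H (AImp a b) \<Longrightarrow> pr \<Gamma> H a \<Longrightarrow> pr \<Gamma> H b" by (rule pr_mp)

lemma impI': "pureA h \<Longrightarrow> pr \<Gamma> (h # H) b \<Longrightarrow> pr \<Gamma> H (AImp h b)" by (rule impI)
lemma wk: "pr \<Gamma> [] a \<Longrightarrow> pr \<Gamma> H a" by (erule pr_weaken) simp
lemma P2Q: "pr \<Gamma> [] a \<Longrightarrow> qh \<Gamma> a" using pr_to_qh by blast

lemma dn: "pureA a \<Longrightarrow> pr \<Gamma> H (AImp a (N (N a)))"
  apply (rule impI', simp)+
  apply (rule pr_mp[where a=a])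
   apply (rule hyp; simp; fail)+
  done

lemma stabBot: "pr \<Gamma> H (AImp (N (N ABot)) ABot)"
  apply (rule impI', simp)
  apply (rule pr_mp[where a="N ABot"])
   apply (rule hyp; simp; fail)
  apply (rule impI', simp)
  apply (rule hyp; simp; fail)
  done

lemma stabN: "pureA a \<Longrightarrow> pr \<Gamma> H (AImp (N (N (N a))) (N a))"
  apply (rule impI', simp)+
  apply (rule pr_mp[where a="N (N a)"])
   apply (rule hyp; simp; fail)
  apply (rule impI', simp)
  apply (rule pr_mp[where a=a])
   apply (rule hyp; simp; fail)+
  done

lemma stabConj: "pr \<Gamma> [] (AImp (N (N a)) a) \<Longrightarrow> pr \<Gamma> [] (AImp (N (N b)) b) \<Longrightarrow>
   pr \<Gamma> H (AImp (N (N (AConj a b))) (AConj a b))"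
  apply (frule pr_pure, drule wk)
  apply (frule pr_pure, drule wk)
  apply (rule impI', simp)
  apply (rule conjI)
   apply (rule pr_mp[where a="N (N a)"], assumption)
   apply (rule impI', simp)
   apply (rule pr_mp[where a="N (AConj a b)"])
    apply (rule hyp; simp; fail)
   apply (rule impI', simp)
   apply (rule pr_mp[where a=a])
    apply (rule hyp; simp; fail)
   apply (rule conjD1[where b=b])
   apply (rule hyp; simp; fail)
  apply (rule pr_mp[where a="N (N b)"], assumption)
  apply (rule impI', simp)
  apply (rule pr_mp[where a="N (AConj a b)"])
   apply (rule hyp; simp; fail)
  apply (rule impI', simp)
  apply (rule pr_mp[where a=b])
   apply (rule hyp; simp; fail)
  apply (rule conjD2[where a=a])
  apply (rule hyp; simp; fail)
  done

lemma stabImp: "pr \<Gamma> [] (AImp (N (N b)) b) \<Longrightarrow> pureA a \<Longrightarrow>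
   pr \<Gamma> H (AImp (N (N (AImp a b))) (AImp a b))"
  apply (frule pr_pure, drule wk)
  apply (rule impI', simp)+
  apply (rule pr_mp[where a="N (N b)"], assumption)
  apply (rule impI', simp)
  apply (rule pr_mp[where a="N (AImp a b)"])
   apply (rule hyp; simp; fail)
  apply (rule impI', simp)
  apply (rule pr_mp[where a=b])
   apply (rule hyp; simp; fail)
  apply (rule pr_mp[where a=a])
   apply (rule hyp; simp; fail)+
  done

lemma orI1: "pureA a \<Longrightarrow> pureA b \<Longrightarrow> pr \<Gamma> H (AImp a (N (AConj (N a) (N b))))"
  apply (rule impI', simp)+
  apply (rule pr_mp[where a=a])
   apply (rule conjD1[where b="N b"])
   apply (rule hyp; simp; fail)+
  done

lemma orI2: "pureA a \<Longrightarrow> pureA b \<Longrightarrow> pr \<Gamma> H (AImp b (N (AConj (N a) (N b))))"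
  apply (rule impI', simp)+
  apply (rule pr_mp[where a=b])
   apply (rule conjD2[where a="N a"])
   apply (rule hyp; simp; fail)+
  done

lemma orE: "pr \<Gamma> [] (AImp (N (N c)) c) \<Longrightarrow> pureA a \<Longrightarrow> pureA b \<Longrightarrow>
  pr \<Gamma> H (AImp (AImp a c) (AImp (AImp b c) (AImp (N (AConj (N a) (N b))) c)))"
  apply (frule pr_pure, drule wk)
  apply (rule impI', simp)+
  apply (rule pr_mp[where a="N (N c)"], assumption)
  apply (rule impI', simp)
  apply (rule pr_mp[where a="AConj (N a) (N b)"])
   apply (rule hyp; simp; fail)
  apply (rule conjI)
   apply (rule impI', simp)
   apply (rule pr_mp[where a=c])
    apply (rule hyp; simp; fail)
   apply (rule pr_mp[where a=a])
    apply (rule hyp; simp; fail)+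
  apply (rule impI', simp)
  apply (rule pr_mp[where a=c])
   apply (rule hyp; simp; fail)
  apply (rule pr_mp[where a=b])
   apply (rule hyp; simp; fail)+
  done

lemma qImp: "pureA a \<Longrightarrow> pureA b \<Longrightarrow> pr \<Gamma> H (AImp (N (N (AImp a b))) (AImp (N (N a)) (N (N b))))"
  apply (rule impI', simp)+
  apply (rule pr_mp[where a="N (AImp a b)"])
   apply (rule hyp; simp; fail)
  apply (rule impI', simp)
  apply (rule pr_mp[where a="N a"])
   apply (rule hyp; simp; fail)
  apply (rule impI', simp)
  apply (rule pr_mp[where a=b])
   apply (rule hyp; simp; fail)
  apply (rule pr_mp[where a=a])
   apply (rule hyp; simp; fail)+
  done

lemma qConj: "pureA a \<Longrightarrow> pureA b \<Longrightarrow> pr \<Gamma> H (AConj (AImp (N (N (AConj a b))) (AConj (N (N a)) (N (N b))))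
   (AImp (AConj (N (N a)) (N (N b))) (N (N (AConj a b)))))"
  apply (rule conjI)
   apply (rule impI', simp)
   apply (rule conjI)
    apply (rule impI', simp)
    apply (rule pr_mp[where a="N (AConj a b)"])
     apply (rule hyp; simp; fail)
    apply (rule impI', simp)
    apply (rule pr_mp[where a=a])
     apply (rule hyp; simp; fail)
    apply (rule conjD1[where b=b])
    apply (rule hyp; simp; fail)
   apply (rule impI', simp)
   apply (rule pr_mp[where a="N (AConj a b)"])
    apply (rule hyp; simp; fail)
   apply (rule impI', simp)
   apply (rule pr_mp[where a=b])
    apply (rule hyp; simp; fail)
   apply (rule conjD2[where a=a])
   apply (rule hyp; simp; fail)
  apply (rule impI', simp)+
  apply (rule pr_mp[where a="N a"])
   apply (rule conjD1[where b="N (N b)"])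
   apply (rule hyp; simp; fail)
  apply (rule impI', simp)
  apply (rule pr_mp[where a="N b"])
   apply (rule conjD2[where a="N (N a)"])
   apply (rule hyp; simp; fail)
  apply (rule impI', simp)
  apply (rule pr_mp[where a="AConj a b"])
   apply (rule hyp; simp; fail)
  apply (rule conjI)
   apply (rule hyp; simp; fail)+
  done

lemma qDisj: "pureA a \<Longrightarrow> pureA b \<Longrightarrow> pr \<Gamma> H (AConj
   (AImp (N (N (ADisj a b))) (N (AConj (N (N (N a))) (N (N (N b))))))
   (AImp (N (AConj (N (N (N a))) (N (N (N b))))) (N (N (ADisj a b)))))"
  apply (rule conjI)
   apply (rule impI', simp)+
   apply (rule pr_mp[where a="N (ADisj a b)"])
    apply (rule hyp; simp; fail)
   apply (rule impI', simp)
   apply (rule disjE[where a=a and b=b])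
     apply (rule hyp; simp; fail)
    apply (rule pr_mp[where a="N (N a)"])
     apply (rule conjD1[where b="N (N (N b))"])
     apply (rule hyp; simp; fail)
    apply (rule impI', simp)
    apply (rule pr_mp[where a=a])
     apply (rule hyp; simp; fail)+
   apply (rule pr_mp[where a="N (N b)"])
    apply (rule conjD2[where a="N (N (N a))"])
    apply (rule hyp; simp; fail)
   apply (rule impI', simp)
   apply (rule pr_mp[where a=b])
    apply (rule hyp; simp; fail)+
  apply (rule impI', simp)+
  apply (rule pr_mp[where a="AConj (N (N (N a))) (N (N (N b)))"])
   apply (rule hyp; simp; fail)
  apply (rule conjI)
   apply (rule impI', simp)
   apply (rule pr_mp[where a="N a"])
    apply (rule hyp; simp; fail)
   apply (rule impI', simp)
   apply (rule pr_mp[where a="ADisj a b"])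
    apply (rule hyp; simp; fail)
   apply (rule disjI1)
    apply (rule hyp; simp; fail)
   apply simp
  apply (rule impI', simp)
  apply (rule pr_mp[where a="N b"])
   apply (rule hyp; simp; fail)
  apply (rule impI', simp)
  apply (rule pr_mp[where a="ADisj a b"])
   apply (rule hyp; simp; fail)
  apply (rule disjI2)
   apply (rule hyp; simp; fail)
  apply simp
  done

lemma allI': "pr \<Gamma> [] (AImp b a) \<Longrightarrow> x \<notin> freeA b \<Longrightarrow> pr \<Gamma> H (AImp b (AAll (abstA x a)))"
  by (rule pr_qh, rule qh_all, rule P2Q)

lemma exI': "pr \<Gamma> [] (AImp a b) \<Longrightarrow> x \<notin> freeA b \<Longrightarrow> pr \<Gamma> H (AImp (AEx (abstA x a)) b)"
  by (rule pr_qh, rule qh_ex, rule P2Q)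

lemma instAx: "pureA a \<Longrightarrow> pr \<Gamma> H (AImp (AAll a) (instA x a))"
  by (rule pr_ax) (auto intro: int_ax.intros simp: pure_ren)

lemma exAx: "pureA a \<Longrightarrow> pr \<Gamma> H (AImp (instA x a) (AEx a))"
  by (rule pr_ax) (auto intro: int_ax.intros simp: pure_ren)

lemma instAxN: "pureA a \<Longrightarrow> pr \<Gamma> H (AImp (AAll (N a)) (N (instA x a)))"
  using instAx[of "N a" \<Gamma> H x] by simp

lemma instAxNNN: "pureA a \<Longrightarrow> pr \<Gamma> H (AImp (AAll (N (N (N a)))) (N (N (N (instA x a)))))"
  using instAx[of "N (N (N a))" \<Gamma> H x] by simp

lemma freshA: "\<exists>x. x \<notin> freeA a"
  using fresh finite_free(2) by blast

lemma stabAll: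
  assumes st: "\<And>x. pr \<Gamma> [] (AImp (N (N (instA x C))) (instA x C))" and pC: "pureA C"
  shows "pr \<Gamma> [] (AImp (N (N (AAll C))) (AAll C))"
proof -
  obtain x where x: "x \<notin> freeA (AAll C)" using freshA by blast
  have "pr \<Gamma> [] (AImp (N (N (AAll C))) (instA x C))"
    using st[of x] pC
    apply -
    apply (frule pr_pure, drule wk)
    apply (rule impI', simp)
    apply (rule pr_mp[where a="N (N (instA x C))"], assumption)
    apply (rule impI', simp add: pure_ren)
    apply (rule pr_mp[where a="N (AAll C)"])
     apply (rule hyp; simp; fail)
    apply (rule impI', simp)
    apply (rule pr_mp[where a="instA x C"])
     apply (rule hyp; simp add: pure_ren; fail)
    apply (rule pr_mp[where a="AAll C"])
     apply (rule instAx, simp)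
    apply (rule hyp; simp; fail)
    done
  then have "pr \<Gamma> [] (AImp (N (N (AAll C))) (AAll (abstA x (instA x C))))"
    by (rule allI') (use x in simp)
  then show ?thesis using x by (simp add: abst_inst)
qed

lemma stabT: "\<forall>\<rho>. pr \<Gamma> [] (AImp (N (N (renA \<rho> (tP p)))) (renA \<rho> (tP p)))" "(a::qprob) = a"
proof (induct p and a)
  case (PConj p q)
  then show ?case by (auto intro: stabConj)
next
  case (PImp p q)
  then show ?case by (auto intro: stabImp simp: pure_ren)
next
  case (PAll p)
  show ?case
  proof
    fix \<rho>
    have "pr \<Gamma> [] (AImp (N (N (AAll (renA (liftr \<rho>) (tP p))))) (AAll (renA (liftr \<rho>) (tP p))))"
    proof (rule stabAll)
      fix x
      show "pr \<Gamma> [] (AImp (N (N (instA x (renA (liftr \<rho>) (tP p))))) (instA x (renA (liftr \<rho>) (tP p))))"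
        using PAll[rule_format, of "instv x \<circ> liftr \<rho>"] by (simp add: ren_comp)
    qed (simp add: pure_ren)
    then show "pr \<Gamma> [] (AImp (N (N (renA \<rho> (tP (PAll p))))) (renA \<rho> (tP (PAll p))))" by simp
  qed
qed (auto intro: stabBot stabN simp: pure_ren)

lemma stab: "pr \<Gamma> [] (AImp (N (N (tP p))) (tP p))"
  using stabT(1)[of \<Gamma> p] by (metis ren_id(2) id_def)

lemma clsound: "cl_ax p \<Longrightarrow> qh \<Gamma> (tP p)"
proof (induct rule: cl_ax.induct)
  case (6 p q) show ?case by (rule P2Q) (simp add: orI1)
next
  case (7 q p) show ?case by (rule P2Q) (simp add: orI2)
next
  case (8 p r q) show ?case by (rule P2Q) (simp add: orE stab)
next
  case (10 p) show ?case by (rule P2Q) (simp add: stab)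
next
  case (11 p x) show ?case by (simp add: t_ren, rule P2Q, rule instAx, simp)
next
  case (12 x p)
  show ?case
    apply (simp add: t_ren, rule P2Q)
    apply (rule impI', simp add: pure_ren)+
    apply (rule pr_mp[where a="instA x (tP p)"])
     apply (rule pr_mp[where a="AAll (N (tP p))"])
      apply (rule instAxN, simp)
     apply (rule hyp; simp; fail)
    apply (rule hyp; simp add: pure_ren; fail)
    done
qed (auto intro!: qh_ax int_ax.intros)

lemma intsound: "int_ax a \<Longrightarrow> qh \<Gamma> (tA a)"
  by (induct rule: int_ax.induct) (auto intro!: qh_ax int_ax.intros simp: t_ren pure_ren)

lemma qExists:
  fixes A assumes pA: "pureA A"
  shows "pr \<Gamma> [] (AConj (AImp (N (N (AEx A))) (N (AAll (N (N (N A))))))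
                       (AImp (N (AAll (N (N (N A))))) (N (N (AEx A)))))"
proof -
  obtain x where x: "x \<notin> freeA (AAll A)" using freshA by blast
  have e1: "pr \<Gamma> [] (AImp (instA x A) (N (AAll (N (N (N A))))))"
    using pA
    apply -
    apply (rule impI', simp add: pure_ren)+
    apply (rule pr_mp[where a="N (N (instA x A))"])
     apply (rule pr_mp[where a="AAll (N (N (N A)))"])
      apply (rule instAxNNN, simp)
     apply (rule hyp; simp; fail)
    apply (rule impI', simp add: pure_ren)
    apply (rule pr_mp[where a="instA x A"])
     apply (rule hyp; simp add: pure_ren; fail)+
    done
  have "pr \<Gamma> [] (AImp (AEx (abstA x (instA x A))) (N (AAll (N (N (N A))))))"
    by (rule exI'[OF e1]) (use x in simp)
  then have e2: "pr \<Gamma> [] (AImp (AEx A) (N (AAll (N (N (N A))))))" using x by (simp add: abst_inst)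
  have e3: "pr \<Gamma> [] (AImp (N (AEx A)) (N (N (N (instA x A)))))"
    using pA
    apply -
    apply (rule impI', simp add: pure_ren)+
    apply (rule pr_mp[where a="N (instA x A)"])
     apply (rule hyp; simp add: pure_ren; fail)
    apply (rule impI', simp add: pure_ren)
    apply (rule pr_mp[where a="AEx A"])
     apply (rule hyp; simp; fail)
    apply (rule pr_mp[where a="instA x A"])
     apply (rule exAx, simp)
    apply (rule hyp; simp add: pure_ren; fail)
    done
  have "pr \<Gamma> [] (AImp (N (AEx A)) (AAll (abstA x (N (N (N (instA x A)))))))"
    by (rule allI'[OF e3]) (use x in simp)
  then have e4: "pr \<Gamma> [] (AImp (N (AEx A)) (AAll (N (N (N A)))))" using x by (simp add: abst_inst)
  show ?thesis
    using pA
    apply -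
    apply (rule conjI)
     apply (rule impI', simp)+
     apply (rule pr_mp[where a="N (AEx A)"])
      apply (rule hyp; simp; fail)
     apply (rule impI', simp)
     apply (rule pr_mp[where a="AAll (N (N (N A)))"])
      apply (rule pr_mp[where a="AEx A"])
       apply (rule wk[OF e2])
      apply (rule hyp; simp; fail)
     apply (rule hyp; simp; fail)
    apply (rule impI', simp)+
    apply (rule pr_mp[where a="AAll (N (N (N A)))"])
     apply (rule hyp; simp; fail)
    apply (rule pr_mp[where a="N (AEx A)"])
     apply (rule wk[OF e4])
    apply (rule hyp; simp; fail)
    done
qed

lemma qAll:
  fixes A assumes pA: "pureA A"
  shows "pr \<Gamma> [] (AImp (N (N (AAll A))) (AAll (N (N A))))"
proof -
  obtain x where x: "x \<notin> freeA (AAll A)" using freshA by blast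
  have e: "pr \<Gamma> [] (AImp (N (N (AAll A))) (N (N (instA x A))))"
    using pA
    apply -
    apply (rule impI', simp add: pure_ren)+
    apply (rule pr_mp[where a="N (AAll A)"])
     apply (rule hyp; simp; fail)
    apply (rule impI', simp)
    apply (rule pr_mp[where a="instA x A"])
     apply (rule hyp; simp add: pure_ren; fail)
    apply (rule pr_mp[where a="AAll A"])
     apply (rule instAx, simp)
    apply (rule hyp; simp; fail)
    done
  have "pr \<Gamma> [] (AImp (N (N (AAll A))) (AAll (abstA x (N (N (instA x A))))))"
    by (rule allI'[OF e]) (use x in simp)
  then show ?thesis using x by (simp add: abst_inst)
qed

lemma qaxPsound: "qhc_axP p \<Longrightarrow> qh \<Gamma> (tP p)"
proof (induct rule: qhc_axP.induct)
  case (1 p) then show ?case by (simp, rule P2Q, rule stab)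
next
  case (2 a b) then show ?case by (simp, rule P2Q, rule qImp) simp_all
next
  case (3 a b) then show ?case by (simp add: PIff_def, rule P2Q, rule qConj) simp_all
next
  case (4 a b) then show ?case by (simp add: PIff_def, rule P2Q, rule qDisj) simp_all
next
  case 5 then show ?case by (simp, rule P2Q, rule stabBot)
next
  case (6 a) then show ?case by (simp add: PIff_def, rule P2Q, rule qExists) simp
next
  case (7 a) then show ?case by (simp, rule P2Q, rule qAll) simp
qed

lemma qaxAsound: "qhc_axA a \<Longrightarrow> qh \<Gamma> (tA a)"
proof (induct rule: qhc_axA.induct)
  case (1 a) then show ?case by (simp, rule P2Q, rule dn) simp
next
  case (2 p q) then show ?case by (simp, rule qh_id) simp
next
  case 3 then show ?case by (simp, rule qh_id) simp
qed

lemma qhcsound: "qhcP \<Gamma> p \<Longrightarrow> (\<forall>b\<in>\<Gamma>. pureA b) \<Longrightarrow> qh \<Gamma> (tP p)"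
  "qhcA \<Gamma> a \<Longrightarrow> (\<forall>b\<in>\<Gamma>. pureA b) \<Longrightarrow> qh \<Gamma> (tA a)"
proof (induct rule: qhcP_qhcA.inducts)
  case (p_ax p) from p_ax(1) show ?case by (rule clsound)
next
  case (p_qax p) from p_qax(1) show ?case by (rule qaxPsound)
next
  case (p_mp p q) then show ?case by (auto intro: qh_mp)
next
  case (p_all q p x)
  have "x \<notin> freeA (tP q)" using p_all t_free(1) by blast
  then show ?case using p_all by (simp add: t_ren qh_all)
next
  case (p_ex p q x)
  have xq: "x \<notin> freeA (N (tP q))" using p_ex t_free(1) by auto
  have 1: "pr \<Gamma> [] (AImp (N (tP q)) (N (tP p)))"
    using p_ex(2)[OF p_ex(4)]
    apply -
    apply (drule pr_qh[where H="[]"])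
    apply (frule pr_pure, drule wk)
    apply (rule impI', simp)+
    apply (rule pr_mp[where a="tP q"])
     apply (rule hyp; simp; fail)
    apply (rule pr_mp[where a="tP p"])
     apply simp
    apply (rule hyp; simp; fail)
    done
  have "pr \<Gamma> [] (AImp (N (tP q)) (AAll (abstA x (N (tP p)))))" by (rule allI'[OF 1 xq])
  then have 2: "pr \<Gamma> [] (AImp (N (tP q)) (AAll (N (abstA x (tP p)))))" by simp
  have "pr \<Gamma> [] (AImp (N (AAll (N (abstA x (tP p))))) (tP q))"
    apply (rule impI', simp add: pure_ren)
    apply (rule pr_mp[where a="N (N (tP q))"])
     apply (rule wk[OF stab])
    apply (rule impI', simp)
    apply (rule pr_mp[where a="AAll (N (abstA x (tP p)))"])
     apply (rule hyp; simp add: pure_ren; fail)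
    apply (rule pr_mp[where a="N (tP q)"])
     apply (rule wk[OF 2])
    apply (rule hyp; simp; fail)
    done
  then show ?case by (simp add: t_ren P2Q)
next
  case (p_quest a)
  have "qh \<Gamma> (AImp (tA a) (N (N (tA a))))" by (rule P2Q, rule dn) simp
  then show ?case using p_quest by (simp add: qh_mp)
next
  case (a_hyp a)
  then show ?case by (simp add: t_pure_id qh_hyp)
next
  case (a_ax a) from a_ax(1) show ?case by (rule intsound)
next
  case (a_qax a) from a_qax(1) show ?case by (rule qaxAsound)
next
  case (a_mp a b) then show ?case by (auto intro: qh_mp)
next
  case (a_all b a x)
  have "x \<notin> freeA (tA b)" using a_all t_free(2) by blast
  then show ?case using a_all by (simp add: t_ren qh_all)
next
  case (a_ex a b x)
  have "x \<notin> freeA (tA b)" using a_ex t_free(2) by blast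
  then show ?case using a_ex by (simp add: t_ren qh_ex)
next
  case (a_bang p) then show ?case by simp
qed

theorem theorem3p5:
  fixes \<alpha>s :: "qprob list" and \<alpha> :: qprob
  assumes "\<forall>\<beta>\<in>set \<alpha>s. pureA \<beta>"
    and "pureA \<alpha>"
    and "qhcA (set \<alpha>s) \<alpha>"
  shows "qh (set \<alpha>s) \<alpha>"
  using qhcsound(2)[OF assms(3) assms(1)] assms(2) by (simp add: t_pure_id)

end
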